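(* Let $n\ge 6$ and let $K_n$ be a random linear embedding of the complete graph on $n$ vertices in $C^3$. Then the mean sum of squared linking numbers of $K_n$ equals $$\frac{q}{16}\sum_{k=3}^{n-3}\sum_{l=3}^{n-k}\frac{n!}{(n-k-l)!}=\frac{q}{16}\sum_{i=6}^{n}\frac{n!}{(n-i)!}(i-5),$$ where $q$ is the constant defined in the context.
   Context: A random linear embedding of a graph $G$ in $C^3=[0,1]^3$: the vertices are placed at independent uniformly distributed points of $C^3$, and each edge is realized as the straight segment between its endpoints. The mean sum of squared linking numbers of the embedded graph is $E\big[\sum \mathrm{lk}(C,C')^2\big]$, the sum taken over all unordered pairs $\{C,C'\}$ of vertex-disjoint cycles of the graph (each of length $\ge3$). For oriented segments $l,l'$, $\epsilon(l,l')$ denotes the signed crossing in orthogonal projection onto a fixed plane ($0$ if the projections do not cross, else $\pm1$ by the right-hand rule). With $A,B,C,P,Q,R$ independent uniform points in $C^3$ and $X\to Y$ the segment oriented from $X$ to $Y$: $2s=P(\epsilon(A\to B,P\to Q)\ne0)$, $u=E[\epsilon(A\to B,P\to Q)\epsilon(A\to B,Q\to R)]$, $v=E[\epsilon(A\to B,P\to Q)\epsilon(B\to C,Q\to R)]$, and $q=s+2(u+v)>0$. *)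

theory Defs
  imports "HOL-Probability.Probability"
begin

type_synonym point = "real ^ 3"

definition cube3 :: "point set" where
  "cube3 = {x. \<forall>i. 0 \<le> x $ i \<and> x $ i \<le> 1}"

definition unif_cube :: "point measure" where
  "unif_cube = uniform_measure lborel cube3"

definition seg_pt :: "point \<Rightarrow> point \<Rightarrow> real \<Rightarrow> point" where
  "seg_pt X Y s = X + s *\<^sub>R (Y - X)"

definition proj_xy :: "point \<Rightarrow> real \<times> real" where
  "proj_xy x = (x $ 1, x $ 2)"

definition height :: "point \<Rightarrow> real" where
  "height x = x $ 3"

definition cross2 :: "point \<Rightarrow> point \<Rightarrow> real" where
  "cross2 d e = d $ 1 * e $ 2 - d $ 2 * e $ 1"

text \<open>Signed crossing eps(X->Y, P->Q) of two oriented segments in the projection: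
  0 if the projections do not cross (or are parallel, a null event); otherwise the
  crossing sign by the right-hand rule: with over-strand direction a and under-strand
  direction b (projected), the sign is sgn(a1 b2 - a2 b1).  Writing d = Y - X,
  e = Q - P, this equals sgn(height of first strand - height of second) * sgn(cross2 d e).\<close>
definition eps :: "point \<Rightarrow> point \<Rightarrow> point \<Rightarrow> point \<Rightarrow> real" where
  "eps X Y P Q =
     (if cross2 (Y - X) (Q - P) \<noteq> 0 \<and>
         (\<exists>s t. 0 \<le> s \<and> s \<le> 1 \<and> 0 \<le> t \<and> t \<le> 1 \<and>
                proj_xy (seg_pt X Y s) = proj_xy (seg_pt P Q t))
      then (let (s, t) = (THE (s, t). proj_xy (seg_pt X Y s) = proj_xy (seg_pt P Q t))
            in sgn (height (seg_pt X Y s) - height (seg_pt P Q t)) * sgn (cross2 (Y - X) (Q - P)))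
      else 0)"

text \<open>Six independent uniform points A,B,C,P,Q,R = x 0, ..., x 5.\<close>
definition six_pts :: "(nat \<Rightarrow> point) measure" where
  "six_pts = PiM {..<6} (\<lambda>_. unif_cube)"

definition const_s :: real where
  "const_s = measure six_pts {x \<in> space six_pts. eps (x 0) (x 1) (x 3) (x 4) \<noteq> 0} / 2"

definition const_u :: real where
  "const_u = (\<integral>x. eps (x 0) (x 1) (x 3) (x 4) * eps (x 0) (x 1) (x 4) (x 5) \<partial>six_pts)"

definition const_v :: real where
  "const_v = (\<integral>x. eps (x 0) (x 1) (x 3) (x 4) * eps (x 1) (x 2) (x 4) (x 5) \<partial>six_pts)"

definition const_q :: real where
  "const_q = const_s + 2 * (const_u + const_v)"

definition cyc_edges :: "nat list \<Rightarrow> nat set set" where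
  "cyc_edges xs = {{xs ! i, xs ! ((i + 1) mod length xs)} | i. i < length xs}"

definition is_cyc_list :: "nat \<Rightarrow> nat list \<Rightarrow> bool" where
  "is_cyc_list n xs \<longleftrightarrow> distinct xs \<and> 3 \<le> length xs \<and> set xs \<subseteq> {..<n}"

definition cycles :: "nat \<Rightarrow> nat set set set" where
  "cycles n = {cyc_edges xs | xs. is_cyc_list n xs}"

definition cyc_verts :: "nat set set \<Rightarrow> nat set" where
  "cyc_verts C = \<Union>C"

definition lk_list :: "(nat \<Rightarrow> point) \<Rightarrow> nat list \<Rightarrow> nat list \<Rightarrow> real" where
  "lk_list pos xs ys =
     (\<Sum>i<length xs. \<Sum>j<length ys.
        eps (pos (xs ! i)) (pos (xs ! ((i + 1) mod length xs)))
            (pos (ys ! j)) (pos (ys ! ((j + 1) mod length ys)))) / 2"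

text \<open>Linking number of cycles C, C' (edge sets), with an arbitrarily chosen orientation;
  its square does not depend on the orientation.\<close>
definition lk :: "nat \<Rightarrow> (nat \<Rightarrow> point) \<Rightarrow> nat set set \<Rightarrow> nat set set \<Rightarrow> real" where
  "lk n pos C C' =
     lk_list pos (SOME xs. is_cyc_list n xs \<and> cyc_edges xs = C)
                 (SOME ys. is_cyc_list n ys \<and> cyc_edges ys = C')"

definition disj_cycle_pairs :: "nat \<Rightarrow> nat set set set set" where
  "disj_cycle_pairs n = {{C, C'} | C C'. C \<in> cycles n \<and> C' \<in> cycles n \<and>
                                        cyc_verts C \<inter> cyc_verts C' = {}}"

definition sq_lk_pair :: "nat \<Rightarrow> (nat \<Rightarrow> point) \<Rightarrow> nat set set set \<Rightarrow> real" where
  "sq_lk_pair n pos Pr =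
     (let C = (SOME C. C \<in> Pr); C' = (SOME C'. C' \<in> Pr \<and> C' \<noteq> C) in (lk n pos C C')\<^sup>2)"

definition embed_measure :: "nat \<Rightarrow> (nat \<Rightarrow> point) measure" where
  "embed_measure n = PiM {..<n} (\<lambda>_. unif_cube)"

definition mean_sq_lk :: "nat \<Rightarrow> real" where
  "mean_sq_lk n = (\<integral>pos. (\<Sum>Pr\<in>disj_cycle_pairs n. sq_lk_pair n pos Pr) \<partial>embed_measure n)"

end

theory Submission
  imports Defs
begin

lemma cross2_neg1: "cross2 (-d) e = - cross2 d e" by (simp add: cross2_def)
lemma cross2_neg2: "cross2 d (-e) = - cross2 d e" by (simp add: cross2_def)
lemma cross2_swap: "cross2 e d = - cross2 d e" by (simp add: cross2_def)

lemma proj_seg: "proj_xy (seg_pt X Y s) = (X$1 + s*(Y$1 - X$1), X$2 + s*(Y$2 - X$2))"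
  by (simp add: proj_xy_def seg_pt_def)

lemma sol_exists:
  assumes D: "cross2 (Y - X) (Q - P) \<noteq> 0"
  shows "proj_xy (seg_pt X Y (cross2 (P - X) (Q - P) / cross2 (Y - X) (Q - P)))
       = proj_xy (seg_pt P Q (cross2 (P - X) (Y - X) / cross2 (Y - X) (Q - P)))"
  using D unfolding proj_seg cross2_def by (simp add: field_simps)

lemma sol_unique:
  assumes D: "cross2 (Y - X) (Q - P) \<noteq> 0"
    and "proj_xy (seg_pt X Y s) = proj_xy (seg_pt P Q t)"
    and "proj_xy (seg_pt X Y s') = proj_xy (seg_pt P Q t')"
  shows "s = s' \<and> t = t'"
proof -
  define d1 where "d1 = Y$1 - X$1"
  define d2 where "d2 = Y$2 - X$2"
  define e1 where "e1 = Q$1 - P$1"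
  define e2 where "e2 = Q$2 - P$2"
  have p: "X$1 + s*d1 = P$1 + t*e1" "X$2 + s*d2 = P$2 + t*e2"
    using assms(2) unfolding proj_seg d1_def d2_def e1_def e2_def by simp_all
  have p': "X$1 + s'*d1 = P$1 + t'*e1" "X$2 + s'*d2 = P$2 + t'*e2"
    using assms(3) unfolding proj_seg d1_def d2_def e1_def e2_def by simp_all
  have q1: "(s - s') * d1 = (t - t') * e1" using p(1) p'(1) by (simp only: left_diff_distrib; linarith)
  have q2: "(s - s') * d2 = (t - t') * e2" using p(2) p'(2) by (simp only: left_diff_distrib; linarith)
  have Dd: "d1 * e2 - d2 * e1 \<noteq> 0" using D by (simp add: cross2_def d1_def d2_def e1_def e2_def)
  have "(s - s') * (d1 * e2 - d2 * e1) = ((s - s') * d1) * e2 - ((s - s') * d2) * e1"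
    by (simp only: right_diff_distrib mult.assoc)
  also have "\<dots> = ((t - t') * e1) * e2 - ((t - t') * e2) * e1" by (simp only: q1 q2)
  also have "\<dots> = 0" by (simp only: mult.assoc mult.commute[of e1 e2] diff_self)
  finally have "s = s'" using Dd by simp
  have "(t - t') * (d1 * e2 - d2 * e1) = ((t - t') * e2) * d1 - ((t - t') * e1) * d2"
    by (simp only: right_diff_distrib mult.assoc mult.commute[of d1 e2] mult.commute[of d2 e1])
  also have "\<dots> = ((s - s') * d2) * d1 - ((s - s') * d1) * d2" by (simp only: q1 q2)
  also have "\<dots> = 0" by (simp only: mult.assoc mult.commute[of d1 d2] diff_self)
  finally have "t = t'" using Dd by simp
  with \<open>s = s'\<close> show ?thesis by simp
qed

lemma eps_D0: "cross2 (Y - X) (Q - P) = 0 \<Longrightarrow> eps X Y P Q = 0"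
  by (simp add: eps_def)

lemma eps_char:
  assumes D: "cross2 (Y - X) (Q - P) \<noteq> 0"
    and st: "proj_xy (seg_pt X Y s) = proj_xy (seg_pt P Q t)"
  shows "eps X Y P Q = (if 0 \<le> s \<and> s \<le> 1 \<and> 0 \<le> t \<and> t \<le> 1
      then sgn (height (seg_pt X Y s) - height (seg_pt P Q t)) * sgn (cross2 (Y - X) (Q - P)) else 0)"
proof -
  have the: "(THE (s, t). proj_xy (seg_pt X Y s) = proj_xy (seg_pt P Q t)) = (s, t)"
  proof (rule the_equality)
    show "case (s, t) of (s, t) \<Rightarrow> proj_xy (seg_pt X Y s) = proj_xy (seg_pt P Q t)" using st by simp
    fix p assume "case p of (s, t) \<Rightarrow> proj_xy (seg_pt X Y s) = proj_xy (seg_pt P Q t)"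
    then show "p = (s, t)" using sol_unique[OF D st] by (cases p) simp
  qed
  have ex: "(\<exists>s t. 0 \<le> s \<and> s \<le> 1 \<and> 0 \<le> t \<and> t \<le> 1 \<and>
                proj_xy (seg_pt X Y s) = proj_xy (seg_pt P Q t)) \<longleftrightarrow> (0 \<le> s \<and> s \<le> 1 \<and> 0 \<le> t \<and> t \<le> 1)"
    using st sol_unique[OF D st] by blast
  show ?thesis unfolding eps_def Let_def ex the prod.case by (simp only: D simp_thms not_False_eq_True)
qed

lemma seg_rev: "seg_pt Y X (1 - s) = seg_pt X Y s"
  by (simp add: seg_pt_def algebra_simps)

lemma neg_if: "(if c then (a::real) * - b else 0) = - (if c then a * b else 0)" by simp

lemma eps_rev1: "eps Y X P Q = - eps X Y P Q"
proof (cases "cross2 (Y - X) (Q - P) = 0")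
  case True
  have "cross2 (X - Y) (Q - P) = 0" using True cross2_neg1[of "Y - X"] by simp
  then show ?thesis using True by (simp add: eps_D0)
next
  case False
  let ?s = "cross2 (P - X) (Q - P) / cross2 (Y - X) (Q - P)"
  let ?t = "cross2 (P - X) (Y - X) / cross2 (Y - X) (Q - P)"
  have st: "proj_xy (seg_pt X Y ?s) = proj_xy (seg_pt P Q ?t)" by (rule sol_exists[OF False])
  have st': "proj_xy (seg_pt Y X (1 - ?s)) = proj_xy (seg_pt P Q ?t)" using st by (simp add: seg_rev)
  have D': "cross2 (X - Y) (Q - P) = - cross2 (Y - X) (Q - P)" using cross2_neg1[of "Y - X"] by simp
  have F': "cross2 (X - Y) (Q - P) \<noteq> 0" using False D' by simp
  have c: "(0 \<le> 1 - ?s \<and> 1 - ?s \<le> 1 \<and> R) = (0 \<le> ?s \<and> ?s \<le> 1 \<and> R)" for R by linarith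
  show ?thesis unfolding eps_char[OF False st] eps_char[OF F' st'] D' seg_rev c sgn_minus by (rule neg_if)
qed

lemma eps_rev2: "eps X Y Q P = - eps X Y P Q"
proof (cases "cross2 (Y - X) (Q - P) = 0")
  case True
  have "cross2 (Y - X) (P - Q) = 0" using True cross2_neg2[of _ "Q - P"] by simp
  then show ?thesis using True by (simp add: eps_D0)
next
  case False
  let ?s = "cross2 (P - X) (Q - P) / cross2 (Y - X) (Q - P)"
  let ?t = "cross2 (P - X) (Y - X) / cross2 (Y - X) (Q - P)"
  have st: "proj_xy (seg_pt X Y ?s) = proj_xy (seg_pt P Q ?t)" by (rule sol_exists[OF False])
  have st': "proj_xy (seg_pt X Y ?s) = proj_xy (seg_pt Q P (1 - ?t))" using st by (simp add: seg_rev)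
  have D': "cross2 (Y - X) (P - Q) = - cross2 (Y - X) (Q - P)" using cross2_neg2[of _ "Q - P"] by simp
  have F': "cross2 (Y - X) (P - Q) \<noteq> 0" using False D' by simp
  have c: "(R \<and> 0 \<le> 1 - ?t \<and> 1 - ?t \<le> 1) = (R \<and> 0 \<le> ?t \<and> ?t \<le> 1)" for R by linarith
  show ?thesis unfolding eps_char[OF False st] eps_char[OF F' st'] D' seg_rev c sgn_minus by (rule neg_if)
qed

lemma h1: "sgn (a - b) = - sgn (b - (a::real))" by (simp add: sgn_if)

lemma eps_comm: "eps P Q X Y = eps X Y P Q"
proof (cases "cross2 (Y - X) (Q - P) = 0")
  case True
  have "cross2 (Q - P) (Y - X) = 0" using True cross2_swap[of "Q - P"] by simp
  then show ?thesis using True by (simp add: eps_D0)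
next
  case False
  let ?s = "cross2 (P - X) (Q - P) / cross2 (Y - X) (Q - P)"
  let ?t = "cross2 (P - X) (Y - X) / cross2 (Y - X) (Q - P)"
  have st: "proj_xy (seg_pt X Y ?s) = proj_xy (seg_pt P Q ?t)" by (rule sol_exists[OF False])
  have D': "cross2 (Q - P) (Y - X) = - cross2 (Y - X) (Q - P)" using cross2_swap[of "Q - P"] by simp
  have F': "cross2 (Q - P) (Y - X) \<noteq> 0" using False D' by simp
  have h: "sgn (a - b) * sgn (- D) = sgn (b - a) * sgn D" for a b D :: real
    by (simp add: h1[of a b] sgn_minus)
  have c: "(0 \<le> ?t \<and> ?t \<le> 1 \<and> 0 \<le> ?s \<and> ?s \<le> 1) = (0 \<le> ?s \<and> ?s \<le> 1 \<and> 0 \<le> ?t \<and> ?t \<le> 1)" by blast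
  have e1: "eps P Q X Y = (if 0 \<le> ?t \<and> ?t \<le> 1 \<and> 0 \<le> ?s \<and> ?s \<le> 1
      then sgn (height (seg_pt P Q ?t) - height (seg_pt X Y ?s)) * sgn (- cross2 (Y - X) (Q - P)) else 0)"
    using eps_char[OF F' st[symmetric]] unfolding D' .
  have e2: "eps X Y P Q = (if 0 \<le> ?s \<and> ?s \<le> 1 \<and> 0 \<le> ?t \<and> ?t \<le> 1
      then sgn (height (seg_pt X Y ?s) - height (seg_pt P Q ?t)) * sgn (cross2 (Y - X) (Q - P)) else 0)"
    using eps_char[OF False st] .
  show ?thesis unfolding e1 e2 c h[of "height (seg_pt P Q ?t)"] by (rule refl)
qed

lemma sgn_prod_vals: "sgn (a::real) * sgn b \<in> {-1, 0, 1}"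
  by (cases "a > 0"; cases "a < 0"; cases "b > 0"; cases "b < 0") auto

lemma eps_vals: "eps X Y P Q \<in> {-1, 0, 1}"
  unfolding eps_def Let_def case_prod_beta
  apply (split if_split) apply (intro conjI impI) apply (rule sgn_prod_vals) apply simp done

lemma vals_sq: "(e::real) \<in> {-1, 0, 1} \<Longrightarrow> e^2 = (if e \<noteq> 0 then 1 else 0)" by auto
lemma vals_abs: "(e::real) \<in> {-1, 0, 1} \<Longrightarrow> \<bar>e\<bar> \<le> 1" by auto

lemma eps_sq: "(eps X Y P Q)^2 = (if eps X Y P Q \<noteq> 0 then 1 else 0)"
  by (rule vals_sq[OF eps_vals])

lemma eps_abs: "\<bar>eps X Y P Q\<bar> \<le> 1"
  by (rule vals_abs[OF eps_vals])

lemma cube3_cbox: "cube3 = cbox (vec 0) (vec 1)"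
  unfolding cube3_def interval_cbox_cart[symmetric] by (auto simp: less_eq_vec_def)

lemma cube3_sets[measurable]: "cube3 \<in> sets borel"
  unfolding cube3_cbox by simp

lemma emeasure_cube3: "emeasure lborel cube3 = 1"
proof -
  have b: "(vec 1 - vec 0 :: real^3) \<bullet> b = 1" if "b \<in> Basis" for b
    using that by (auto simp: Basis_vec_def inner_axis)
  have l: "(vec 0 :: real^3) \<bullet> b \<le> vec 1 \<bullet> b" if "b \<in> Basis" for b
    using that by (auto simp: Basis_vec_def inner_axis)
  show ?thesis unfolding cube3_cbox emeasure_lborel_cbox_eq using b l by simp
qed

lemma prob_unif: "prob_space unif_cube"
  unfolding unif_cube_def by (rule prob_space_uniform_measure) (simp_all add: emeasure_cube3)

lemma sets_unif[simp, measurable_cong]: "sets unif_cube = sets borel"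
  unfolding unif_cube_def by simp

lemma space_unif[simp]: "space unif_cube = UNIV"
  unfolding unif_cube_def by simp


abbreviation "UC \<equiv> (\<lambda>_::nat. unif_cube)"

lemma reindex:
  fixes G :: "(nat \<Rightarrow> point) \<Rightarrow> real"
  assumes inj: "inj_on t J" and tJ: "t ` J \<subseteq> K"
    and G: "G \<in> borel_measurable (PiM J UC)"
  shows "(\<integral>\<omega>. G (\<lambda>j\<in>J. \<omega> (t j)) \<partial>PiM K UC) = (\<integral>x. G x \<partial>PiM J UC)"
proof -
  have d: "distr (PiM K UC) (PiM J (\<lambda>i. UC (t i))) (\<lambda>\<omega>. \<lambda>n\<in>J. \<omega> (t n)) = PiM J (\<lambda>i. UC (t i))"
    by (rule distr_PiM_reindex) (use inj tJ prob_unif in auto)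
  have m: "(\<lambda>\<omega>. \<lambda>n\<in>J. \<omega> (t n)) \<in> PiM K UC \<rightarrow>\<^sub>M PiM J UC"
    by (rule measurable_restrict) (use tJ in auto)
  have "(\<integral>x. G x \<partial>PiM J UC) = (\<integral>x. G x \<partial>distr (PiM K UC) (PiM J UC) (\<lambda>\<omega>. \<lambda>n\<in>J. \<omega> (t n)))"
    using d by simp
  also have "\<dots> = (\<integral>\<omega>. G (\<lambda>j\<in>J. \<omega> (t j)) \<partial>PiM K UC)"
    by (rule integral_distr[OF m G])
  finally show ?thesis by simp
qed

lemma transfer:
  fixes G :: "(nat \<Rightarrow> point) \<Rightarrow> real"
  assumes inj: "inj_on t J" and tJ: "t ` J \<subseteq> {..<n}" and J6: "J \<subseteq> {..<6}"
    and G: "G \<in> borel_measurable (PiM J UC)"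
    and Gr: "\<And>x. G x = G (restrict x J)"
  shows "(\<integral>pos. G (\<lambda>j. pos (t j)) \<partial>embed_measure n) = (\<integral>x. G x \<partial>six_pts)"
proof -
  have "(\<integral>pos. G (\<lambda>j. pos (t j)) \<partial>embed_measure n) = (\<integral>pos. G (\<lambda>j\<in>J. pos (t j)) \<partial>embed_measure n)"
    by (subst Gr) (simp add: restrict_def)
  also have "\<dots> = (\<integral>x. G x \<partial>PiM J UC)"
    unfolding embed_measure_def by (rule reindex[OF inj tJ G])
  also have "\<dots> = (\<integral>x. G (\<lambda>j\<in>J. x (id j)) \<partial>six_pts)"
    unfolding six_pts_def by (rule reindex[symmetric]) (use J6 G in auto)
  also have "\<dots> = (\<integral>x. G x \<partial>six_pts)"
    by (subst (2) Gr) (simp add: restrict_def)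
  finally show ?thesis .
qed

lemma eps_explicit: "eps X Y P Q = (if cross2 (Y - X) (Q - P) \<noteq> 0 \<and>
   0 \<le> cross2 (P - X) (Q - P) / cross2 (Y - X) (Q - P) \<and> cross2 (P - X) (Q - P) / cross2 (Y - X) (Q - P) \<le> 1 \<and>
   0 \<le> cross2 (P - X) (Y - X) / cross2 (Y - X) (Q - P) \<and> cross2 (P - X) (Y - X) / cross2 (Y - X) (Q - P) \<le> 1
  then sgn (height (seg_pt X Y (cross2 (P - X) (Q - P) / cross2 (Y - X) (Q - P))) -
            height (seg_pt P Q (cross2 (P - X) (Y - X) / cross2 (Y - X) (Q - P)))) * sgn (cross2 (Y - X) (Q - P))
  else 0)"
proof (cases "cross2 (Y - X) (Q - P) = 0")
  case True
  then show ?thesis by (simp add: eps_D0)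
next
  case False
  show ?thesis unfolding eps_char[OF False sol_exists[OF False]] using False by simp
qed

lemma vec_nth_meas[measurable (raw)]:
  "f \<in> M \<rightarrow>\<^sub>M borel \<Longrightarrow> (\<lambda>x. (f x :: real^3) $ i) \<in> borel_measurable M"
proof -
  assume f: "f \<in> M \<rightarrow>\<^sub>M borel"
  have "(\<lambda>x::real^3. x $ i) \<in> borel_measurable borel"
    by (rule borel_measurable_continuous_onI) (simp add: linear_continuous_on bounded_linear_vec_nth)
  from measurable_compose[OF f this] show ?thesis by simp
qed

lemma eps_measurable[measurable (raw)]:
  assumes [measurable]: "A \<in> M \<rightarrow>\<^sub>M borel" "B \<in> M \<rightarrow>\<^sub>M borel" "C \<in> M \<rightarrow>\<^sub>M borel" "D \<in> M \<rightarrow>\<^sub>M borel"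
  shows "(\<lambda>x. eps (A x) (B x) (C x) (D x)) \<in> borel_measurable M"
  unfolding eps_explicit cross2_def height_def seg_pt_def by measurable

lemma comp_meas[measurable]: "j \<in> J \<Longrightarrow> (\<lambda>x. x j) \<in> PiM J UC \<rightarrow>\<^sub>M borel"
  using measurable_component_singleton[of j J UC]
  by (simp add: measurable_cong_sets[OF refl sets_unif])

lemma prob_emb: "prob_space (embed_measure n)"
  unfolding embed_measure_def by (rule prob_space_PiM) (rule prob_unif)

lemma prob_six: "prob_space six_pts"
  unfolding six_pts_def by (rule prob_space_PiM) (rule prob_unif)

lemma emb_comp_meas[measurable]: "j < n \<Longrightarrow> (\<lambda>x. x j) \<in> embed_measure n \<rightarrow>\<^sub>M borel"
  unfolding embed_measure_def by (rule comp_meas) simp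

lemma six_comp_meas[measurable]: "j < 6 \<Longrightarrow> (\<lambda>x. x j) \<in> six_pts \<rightarrow>\<^sub>M borel"
  unfolding six_pts_def by (rule comp_meas) simp

lemma int_bounded:
  assumes "prob_space M" "f \<in> borel_measurable M" "\<And>x. \<bar>f x\<bar> \<le> 1"
  shows "integrable M (f :: _ \<Rightarrow> real)"
proof -
  interpret prob_space M by fact
  show ?thesis by (rule integrable_const_bound[where B=1]) (use assms in auto)
qed

lemma abs_eps_prod: "\<bar>eps A B C D * eps A' B' C' D'\<bar> \<le> 1"
  using eps_abs[of A B C D] eps_abs[of A' B' C' D'] by (simp add: abs_mult mult_le_one)

lemma int_prod:
  assumes "a < n" "b < n" "c < n" "d < n" "a' < n" "b' < n" "c' < n" "d' < n"
  shows "integrable (embed_measure n) (\<lambda>pos. eps (pos a) (pos b) (pos c) (pos d) * eps (pos a') (pos b') (pos c') (pos d'))"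
  by (rule int_bounded[OF prob_emb]) (use assms in \<open>simp_all add: abs_eps_prod\<close>)

lemma E_s:
  assumes "a < n" "b < n" "c < n" "d < n" "a \<noteq> b" "c \<noteq> d" "a \<noteq> c" "a \<noteq> d" "b \<noteq> c" "b \<noteq> d"
  shows "(\<integral>pos. eps (pos a) (pos b) (pos c) (pos d) * eps (pos a) (pos b) (pos c) (pos d) \<partial>embed_measure n) = 2 * const_s"
proof -
  let ?G = "\<lambda>x::nat\<Rightarrow>point. eps (x 0) (x 1) (x 3) (x 4) * eps (x 0) (x 1) (x 3) (x 4)"
  let ?t = "\<lambda>m. [a, b, a, c, d, a] ! m"
  have "(\<integral>pos. ?G (\<lambda>m. pos (?t m)) \<partial>embed_measure n) = (\<integral>x. ?G x \<partial>six_pts)"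
    apply (rule transfer[where J="{0,1,3,4}"])
    subgoal using assms by (auto simp: inj_on_def)
    subgoal using assms by auto
    subgoal by auto
    subgoal by measurable
    subgoal by simp
    done
  also have "\<dots> = (\<integral>x. indicator {x \<in> space six_pts. eps (x 0) (x 1) (x 3) (x 4) \<noteq> 0} x \<partial>six_pts)"
    by (rule Bochner_Integration.integral_cong) (auto simp: eps_sq power2_eq_square[symmetric] indicator_def)
  also have "\<dots> = measure six_pts {x \<in> space six_pts. eps (x 0) (x 1) (x 3) (x 4) \<noteq> 0}"
    by (simp add: Int_absorb2 subset_iff)
  also have "\<dots> = 2 * const_s" unfolding const_s_def by simp
  finally show ?thesis by simp
qed

lemma E_u:
  assumes "a < n" "b < n" "p < n" "q < n" "r < n"
    "distinct [a, b, p, q, r]"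
  shows "(\<integral>pos. eps (pos a) (pos b) (pos p) (pos q) * eps (pos a) (pos b) (pos q) (pos r) \<partial>embed_measure n) = const_u"
proof -
  let ?G = "\<lambda>x::nat\<Rightarrow>point. eps (x 0) (x 1) (x 3) (x 4) * eps (x 0) (x 1) (x 4) (x 5)"
  let ?t = "\<lambda>m. [a, b, a, p, q, r] ! m"
  have "(\<integral>pos. ?G (\<lambda>m. pos (?t m)) \<partial>embed_measure n) = (\<integral>x. ?G x \<partial>six_pts)"
    apply (rule transfer[where J="{0,1,3,4,5}"])
    subgoal using assms by (auto simp: inj_on_def)
    subgoal using assms by auto
    subgoal by auto
    subgoal by measurable
    subgoal by simp
    done
  then show ?thesis unfolding const_u_def by simp
qed

lemma E_v:
  assumes "a < n" "b < n" "c < n" "p < n" "q < n" "r < n"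
    "distinct [a, b, c, p, q, r]"
  shows "(\<integral>pos. eps (pos a) (pos b) (pos p) (pos q) * eps (pos b) (pos c) (pos q) (pos r) \<partial>embed_measure n) = const_v"
proof -
  let ?G = "\<lambda>x::nat\<Rightarrow>point. eps (x 0) (x 1) (x 3) (x 4) * eps (x 1) (x 2) (x 4) (x 5)"
  let ?t = "\<lambda>m. [a, b, c, p, q, r] ! m"
  have "(\<integral>pos. ?G (\<lambda>m. pos (?t m)) \<partial>embed_measure n) = (\<integral>x. ?G x \<partial>six_pts)"
    apply (rule transfer[where J="{0,1,2,3,4,5}"])
    subgoal using assms by (auto simp: inj_on_def)
    subgoal using assms by auto
    subgoal by auto
    subgoal by measurable
    subgoal by simp
    done
  then show ?thesis unfolding const_v_def by simp
qed

lemma E_zero: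
  assumes "a < n" "b < n" "c < n" "d < n" "a' < n" "b' < n" "c' < n" "d' < n"
    and "c \<noteq> d" "c \<notin> {a, b, a', b', c', d'}" "d \<notin> {a, b, a', b', c', d'}"
  shows "(\<integral>pos. eps (pos a) (pos b) (pos c) (pos d) * eps (pos a') (pos b') (pos c') (pos d') \<partial>embed_measure n) = 0"
proof -
  let ?f = "\<lambda>pos::nat\<Rightarrow>point. eps (pos a) (pos b) (pos c) (pos d) * eps (pos a') (pos b') (pos c') (pos d')"
  let ?t = "\<lambda>j::nat. if j = c then d else if j = d then c else j"
  have inj: "inj_on ?t {..<n}" by (auto simp: inj_on_def split: if_splits)
  have "(\<integral>\<omega>. ?f (\<lambda>j\<in>{..<n}. \<omega> (?t j)) \<partial>PiM {..<n} UC) = (\<integral>x. ?f x \<partial>PiM {..<n} UC)"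
    apply (rule reindex[OF inj])
    subgoal using assms by auto
    subgoal using assms by (intro borel_measurable_times eps_measurable comp_meas) auto
    done
  moreover have "(\<lambda>\<omega>. ?f (\<lambda>j\<in>{..<n}. \<omega> (?t j))) = (\<lambda>\<omega>. - ?f \<omega>)"
  proof (rule ext)
    fix \<omega> :: "nat \<Rightarrow> point"
    have "?f (\<lambda>j\<in>{..<n}. \<omega> (?t j)) = eps (\<omega> a) (\<omega> b) (\<omega> d) (\<omega> c) * eps (\<omega> a') (\<omega> b') (\<omega> c') (\<omega> d')"
    proof -
      have ne: "a \<noteq> c" "a \<noteq> d" "b \<noteq> c" "b \<noteq> d" "a' \<noteq> c" "a' \<noteq> d" "b' \<noteq> c" "b' \<noteq> d"
        "c' \<noteq> c" "c' \<noteq> d" "d' \<noteq> c" "d' \<noteq> d" using assms by auto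
      show ?thesis using assms ne by simp
    qed
    also have "\<dots> = - ?f \<omega>" using eps_rev2[of "\<omega> a" "\<omega> b" "\<omega> d" "\<omega> c"] by simp
    finally show "?f (\<lambda>j\<in>{..<n}. \<omega> (?t j)) = - ?f \<omega>" .
  qed
  ultimately have "(\<integral>x. - ?f x \<partial>embed_measure n) = (\<integral>x. ?f x \<partial>embed_measure n)"
    unfolding embed_measure_def by simp
  then show ?thesis by simp
qed

definition nxt :: "nat \<Rightarrow> nat \<Rightarrow> nat" where "nxt k m = (if Suc m = k then 0 else Suc m)"
definition prv :: "nat \<Rightarrow> nat \<Rightarrow> nat" where "prv k m = (if m = 0 then k - 1 else m - 1)"

lemma mod_nxt: "m < k \<Longrightarrow> (m + 1) mod k = nxt k m"
  unfolding nxt_def by auto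

lemma nxt_lt: "m < k \<Longrightarrow> nxt k m < k" unfolding nxt_def by auto
lemma prv_lt: "m < k \<Longrightarrow> prv k m < k" unfolding prv_def by auto
lemma nxt_prv: "m < k \<Longrightarrow> nxt k (prv k m) = m" unfolding nxt_def prv_def by auto
lemma nxt_ne: "3 \<le> k \<Longrightarrow> m < k \<Longrightarrow> nxt k m \<noteq> m" unfolding nxt_def by auto
lemma prv_ne: "3 \<le> k \<Longrightarrow> m < k \<Longrightarrow> prv k m \<noteq> m" unfolding prv_def by auto
lemma nxt_ne_prv: "3 \<le> k \<Longrightarrow> m < k \<Longrightarrow> nxt k m \<noteq> prv k m" unfolding nxt_def prv_def by auto
lemma nxt2_ne: "3 \<le> k \<Longrightarrow> m < k \<Longrightarrow> nxt k (nxt k m) \<noteq> m" unfolding nxt_def by auto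
lemma nxt_inj: "m < k \<Longrightarrow> m' < k \<Longrightarrow> nxt k m = nxt k m' \<Longrightarrow> m = m'" unfolding nxt_def by (auto split: if_splits)
lemma nxt_ne': "3 \<le> k \<Longrightarrow> m < k \<Longrightarrow> m \<noteq> nxt k m" unfolding nxt_def by auto
lemma prv_ne': "3 \<le> k \<Longrightarrow> m < k \<Longrightarrow> m \<noteq> prv k m" unfolding prv_def by auto
lemma nxt_ne_prv': "3 \<le> k \<Longrightarrow> m < k \<Longrightarrow> prv k m \<noteq> nxt k m" unfolding nxt_def prv_def by auto
lemma nxt2_ne': "3 \<le> k \<Longrightarrow> m < k \<Longrightarrow> m \<noteq> nxt k (nxt k m)" unfolding nxt_def by auto
lemma nxt2_ne1: "3 \<le> k \<Longrightarrow> m < k \<Longrightarrow> nxt k (nxt k m) \<noteq> nxt k m" unfolding nxt_def by auto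
lemma nxt2_ne1': "3 \<le> k \<Longrightarrow> m < k \<Longrightarrow> nxt k m \<noteq> nxt k (nxt k m)" unfolding nxt_def by auto
lemma nxt_eq_prv: "m < k \<Longrightarrow> m' < k \<Longrightarrow> nxt k m' = m \<Longrightarrow> m' = prv k m" unfolding nxt_def prv_def by (auto split: if_splits)

locale twocyc =
  fixes n k l :: nat and X Y :: "nat \<Rightarrow> nat"
  assumes k3: "3 \<le> k" and l3: "3 \<le> l"
    and Xlt: "\<And>a. a < k \<Longrightarrow> X a < n" and Ylt: "\<And>a. a < l \<Longrightarrow> Y a < n"
    and Xinj: "\<And>a b. a < k \<Longrightarrow> b < k \<Longrightarrow> X a = X b \<longleftrightarrow> a = b"
    and Yinj: "\<And>a b. a < l \<Longrightarrow> b < l \<Longrightarrow> Y a = Y b \<longleftrightarrow> a = b"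
    and XY: "\<And>a b. a < k \<Longrightarrow> b < l \<Longrightarrow> X a \<noteq> Y b"
begin

definition e :: "(nat \<Rightarrow> point) \<Rightarrow> nat \<Rightarrow> nat \<Rightarrow> real" where
  "e pos i j = eps (pos (X i)) (pos (X (nxt k i))) (pos (Y j)) (pos (Y (nxt l j)))"

definition I :: "nat \<Rightarrow> nat \<Rightarrow> nat \<Rightarrow> nat \<Rightarrow> real" where
  "I i j i' j' = (\<integral>pos. e pos i j * e pos i' j' \<partial>embed_measure n)"

lemma YX: "a < k \<Longrightarrow> b < l \<Longrightarrow> Y b \<noteq> X a" using XY by metis

lemmas facts = k3 l3 Xlt Ylt Xinj Yinj XY YX nxt_lt prv_lt nxt_ne prv_ne nxt_ne_prv nxt2_ne nxt_ne' prv_ne'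
  nxt_ne_prv' nxt2_ne' nxt2_ne1 nxt2_ne1' nxt_prv

lemma I_zero1:
  assumes "i < k" "j < l" "i' < k" "j' < l" "i' \<noteq> i" "i' \<noteq> nxt k i" "i' \<noteq> prv k i"
  shows "I i j i' j' = 0"
proof -
  have n1: "nxt k i' \<noteq> i" using nxt_eq_prv[of i k i'] assms by auto
  have n2: "nxt k i' \<noteq> nxt k i" using nxt_inj[of i' k i] assms by auto
  have "I i j i' j' = (\<integral>pos. eps (pos (Y j)) (pos (Y (nxt l j))) (pos (X i)) (pos (X (nxt k i))) *
      eps (pos (X i')) (pos (X (nxt k i'))) (pos (Y j')) (pos (Y (nxt l j'))) \<partial>embed_measure n)"
    unfolding I_def e_def by (simp add: eps_comm)
  also have "\<dots> = 0"
    by (rule E_zero) (use assms n1 n2 k3 l3 in \<open>auto simp: facts\<close>)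
  finally show ?thesis .
qed

lemma I_zero2:
  assumes "i < k" "j < l" "i' < k" "j' < l" "j' \<noteq> j" "j' \<noteq> nxt l j" "j' \<noteq> prv l j"
  shows "I i j i' j' = 0"
proof -
  have n1: "nxt l j' \<noteq> j" using nxt_eq_prv[of j l j'] assms by auto
  have n2: "nxt l j' \<noteq> nxt l j" using nxt_inj[of j' l j] assms by auto
  show ?thesis unfolding I_def e_def
    by (rule E_zero) (use assms n1 n2 k3 l3 in \<open>auto simp: facts\<close>)
qed


lemma I_eq: "(\<And>pos. e pos i j * e pos i' j' = F pos) \<Longrightarrow> I i j i' j' = (\<integral>pos. F pos \<partial>embed_measure n)"
  unfolding I_def by simp

context
  fixes i j assumes i: "i < k" and j: "j < l"
begin

lemma c_ss: "I i j i j = 2 * const_s"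
  unfolding I_def e_def by (rule E_s) (use i j in \<open>simp_all add: facts\<close>)

lemma c_sn: "I i j i (nxt l j) = const_u"
  unfolding I_def e_def by (rule E_u) (use i j in \<open>simp_all add: facts\<close>)

lemma c_sp: "I i j i (prv l j) = const_u"
proof -
  have "I i j i (prv l j) = (\<integral>pos. eps (pos (X i)) (pos (X (nxt k i))) (pos (Y (prv l j))) (pos (Y j)) *
     eps (pos (X i)) (pos (X (nxt k i))) (pos (Y j)) (pos (Y (nxt l j))) \<partial>embed_measure n)"
    by (rule I_eq) (use j in \<open>simp add: e_def nxt_prv\<close>)
  also have "\<dots> = const_u" by (rule E_u) (use i j in \<open>simp_all add: facts\<close>)
  finally show ?thesis .
qed

lemma c_ns: "I i j (nxt k i) j = const_u"
proof -
  have "I i j (nxt k i) j = (\<integral>pos. eps (pos (Y j)) (pos (Y (nxt l j))) (pos (X i)) (pos (X (nxt k i))) *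
     eps (pos (Y j)) (pos (Y (nxt l j))) (pos (X (nxt k i))) (pos (X (nxt k (nxt k i)))) \<partial>embed_measure n)"
    by (rule I_eq) (simp add: e_def eps_comm)
  also have "\<dots> = const_u" by (rule E_u) (use i j in \<open>simp_all add: facts\<close>)
  finally show ?thesis .
qed

lemma c_ps: "I i j (prv k i) j = const_u"
proof -
  have "I i j (prv k i) j = (\<integral>pos. eps (pos (Y j)) (pos (Y (nxt l j))) (pos (X (prv k i))) (pos (X i)) *
     eps (pos (Y j)) (pos (Y (nxt l j))) (pos (X i)) (pos (X (nxt k i))) \<partial>embed_measure n)"
    by (rule I_eq) (use i in \<open>simp add: e_def eps_comm nxt_prv mult.commute\<close>)
  also have "\<dots> = const_u" by (rule E_u) (use i j in \<open>simp_all add: facts\<close>)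
  finally show ?thesis .
qed

lemma c_nn: "I i j (nxt k i) (nxt l j) = const_v"
  unfolding I_def e_def by (rule E_v) (use i j in \<open>simp_all add: facts\<close>)

lemma c_pp: "I i j (prv k i) (prv l j) = const_v"
proof -
  have "I i j (prv k i) (prv l j) = (\<integral>pos. eps (pos (X (prv k i))) (pos (X i)) (pos (Y (prv l j))) (pos (Y j)) *
     eps (pos (X i)) (pos (X (nxt k i))) (pos (Y j)) (pos (Y (nxt l j))) \<partial>embed_measure n)"
    by (rule I_eq) (use i j in \<open>simp add: e_def nxt_prv mult.commute\<close>)
  also have "\<dots> = const_v" by (rule E_v) (use i j in \<open>simp_all add: facts\<close>)
  finally show ?thesis .
qed

lemma c_np: "I i j (nxt k i) (prv l j) = const_v"
proof -
  have h: "e pos i j * e pos (nxt k i) (prv l j) =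
     eps (pos (X i)) (pos (X (nxt k i))) (pos (Y (nxt l j))) (pos (Y j)) *
     eps (pos (X (nxt k i))) (pos (X (nxt k (nxt k i)))) (pos (Y j)) (pos (Y (prv l j)))" for pos
    using eps_rev2[of "pos (X i)" "pos (X (nxt k i))" "pos (Y j)" "pos (Y (nxt l j))"]
      eps_rev2[of "pos (X (nxt k i))" "pos (X (nxt k (nxt k i)))" "pos (Y (prv l j))" "pos (Y j)"]
    using j by (simp add: e_def nxt_prv)
  have "I i j (nxt k i) (prv l j) = (\<integral>pos. eps (pos (X i)) (pos (X (nxt k i))) (pos (Y (nxt l j))) (pos (Y j)) *
     eps (pos (X (nxt k i))) (pos (X (nxt k (nxt k i)))) (pos (Y j)) (pos (Y (prv l j))) \<partial>embed_measure n)"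
    by (rule I_eq) (rule h)
  also have "\<dots> = const_v" by (rule E_v) (use i j in \<open>simp_all add: facts\<close>)
  finally show ?thesis .
qed

lemma c_pn: "I i j (prv k i) (nxt l j) = const_v"
proof -
  have h: "e pos i j * e pos (prv k i) (nxt l j) =
     eps (pos (X (prv k i))) (pos (X i)) (pos (Y (nxt l (nxt l j)))) (pos (Y (nxt l j))) *
     eps (pos (X i)) (pos (X (nxt k i))) (pos (Y (nxt l j))) (pos (Y j))" for pos
    using eps_rev2[of "pos (X i)" "pos (X (nxt k i))" "pos (Y j)" "pos (Y (nxt l j))"]
      eps_rev2[of "pos (X (prv k i))" "pos (X i)" "pos (Y (nxt l j))" "pos (Y (nxt l (nxt l j)))"]
    using i by (simp add: e_def nxt_prv mult.commute)
  have "I i j (prv k i) (nxt l j) = (\<integral>pos. eps (pos (X (prv k i))) (pos (X i)) (pos (Y (nxt l (nxt l j)))) (pos (Y (nxt l j))) *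
     eps (pos (X i)) (pos (X (nxt k i))) (pos (Y (nxt l j))) (pos (Y j)) \<partial>embed_measure n)"
    by (rule I_eq) (rule h)
  also have "\<dots> = const_v" by (rule E_v) (use i j in \<open>simp_all add: facts\<close>)
  finally show ?thesis .
qed

lemma key: "(\<Sum>i'<k. \<Sum>j'<l. I i j i' j') = 2 * const_q"
proof -
  let ?Si = "{i, nxt k i, prv k i}" and ?Sj = "{j, nxt l j, prv l j}"
  have 1: "(\<Sum>i'<k. \<Sum>j'<l. I i j i' j') = (\<Sum>i'\<in>?Si. \<Sum>j'<l. I i j i' j')"
    by (rule sum.mono_neutral_right) (use i j in \<open>auto simp: nxt_lt prv_lt I_zero1 intro!: sum.neutral\<close>)
  have 2: "(\<Sum>i'\<in>?Si. \<Sum>j'<l. I i j i' j') = (\<Sum>i'\<in>?Si. \<Sum>j'\<in>?Sj. I i j i' j')"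
  proof (rule sum.cong[OF refl])
    fix i' assume "i' \<in> ?Si"
    hence i': "i' < k" using i by (auto simp: nxt_lt prv_lt)
    show "(\<Sum>j'<l. I i j i' j') = (\<Sum>j'\<in>?Sj. I i j i' j')"
      by (rule sum.mono_neutral_right) (use i j i' in \<open>auto simp: nxt_lt prv_lt I_zero2\<close>)
  qed
  have 3: "(\<Sum>i'\<in>?Si. \<Sum>j'\<in>?Sj. I i j i' j') = 2 * const_s + 4 * const_u + 4 * const_v"
    using i j k3 l3 by (simp add: nxt_ne nxt_ne' prv_ne prv_ne' nxt_ne_prv nxt_ne_prv'
        c_ss c_sn c_sp c_ns c_ps c_nn c_pp c_np c_pn)
  show ?thesis unfolding 1 2 3 const_q_def by simp
qed

end

lemma int_e: "i < k \<Longrightarrow> j < l \<Longrightarrow> i' < k \<Longrightarrow> j' < l \<Longrightarrow>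
   integrable (embed_measure n) (\<lambda>pos. e pos i j * e pos i' j')"
  unfolding e_def by (rule int_prod) (simp_all add: Xlt Ylt nxt_lt)

lemma E_sq: "(\<integral>pos. ((\<Sum>i<k. \<Sum>j<l. e pos i j) / 2)^2 \<partial>embed_measure n) = real k * real l * const_q / 2"
proof -
  have sq: "((\<Sum>i<k. \<Sum>j<l. e pos i j) / 2)^2 = (\<Sum>i<k. \<Sum>j<l. \<Sum>i'<k. \<Sum>j'<l. e pos i j * e pos i' j') / 4" for pos
  proof -
    have "(\<Sum>i<k. \<Sum>j<l. e pos i j) * (\<Sum>i<k. \<Sum>j<l. e pos i j) = (\<Sum>i<k. \<Sum>j<l. \<Sum>i'<k. \<Sum>j'<l. e pos i j * e pos i' j')"
      unfolding sum_distrib_right unfolding sum_distrib_left by (rule refl)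
    then show ?thesis by (simp add: power2_eq_square)
  qed
  have "(\<integral>pos. ((\<Sum>i<k. \<Sum>j<l. e pos i j) / 2)^2 \<partial>embed_measure n)
      = (\<integral>pos. (\<Sum>i<k. \<Sum>j<l. \<Sum>i'<k. \<Sum>j'<l. e pos i j * e pos i' j') \<partial>embed_measure n) / 4"
    unfolding sq by simp
  also have "(\<integral>pos. (\<Sum>i<k. \<Sum>j<l. \<Sum>i'<k. \<Sum>j'<l. e pos i j * e pos i' j') \<partial>embed_measure n)
      = (\<Sum>i<k. \<Sum>j<l. \<Sum>i'<k. \<Sum>j'<l. I i j i' j')"
  proof -
    have i4: "integrable (embed_measure n) (\<lambda>pos. \<Sum>j'<l. e pos i j * e pos i' j')"
      if "i < k" "j < l" "i' < k" for i j i' by (rule Bochner_Integration.integrable_sum) (use that in \<open>simp add: int_e\<close>)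
    have i3: "integrable (embed_measure n) (\<lambda>pos. \<Sum>i'<k. \<Sum>j'<l. e pos i j * e pos i' j')"
      if "i < k" "j < l" for i j by (rule Bochner_Integration.integrable_sum) (use that in \<open>simp add: i4\<close>)
    have i2: "integrable (embed_measure n) (\<lambda>pos. \<Sum>j<l. \<Sum>i'<k. \<Sum>j'<l. e pos i j * e pos i' j')"
      if "i < k" for i by (rule Bochner_Integration.integrable_sum) (use that in \<open>simp add: i3\<close>)
    have "(\<integral>pos. (\<Sum>i<k. \<Sum>j<l. \<Sum>i'<k. \<Sum>j'<l. e pos i j * e pos i' j') \<partial>embed_measure n)
       = (\<Sum>i<k. \<integral>pos. (\<Sum>j<l. \<Sum>i'<k. \<Sum>j'<l. e pos i j * e pos i' j') \<partial>embed_measure n)"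
      by (rule Bochner_Integration.integral_sum) (simp add: i2)
    also have "\<dots> = (\<Sum>i<k. \<Sum>j<l. \<integral>pos. (\<Sum>i'<k. \<Sum>j'<l. e pos i j * e pos i' j') \<partial>embed_measure n)"
      by (rule sum.cong[OF refl], rule Bochner_Integration.integral_sum) (simp add: i3)
    also have "\<dots> = (\<Sum>i<k. \<Sum>j<l. \<Sum>i'<k. \<integral>pos. (\<Sum>j'<l. e pos i j * e pos i' j') \<partial>embed_measure n)"
      by (rule sum.cong[OF refl], rule sum.cong[OF refl], rule Bochner_Integration.integral_sum) (simp add: i4)
    also have "\<dots> = (\<Sum>i<k. \<Sum>j<l. \<Sum>i'<k. \<Sum>j'<l. I i j i' j')"
      unfolding I_def
      by (rule sum.cong[OF refl], rule sum.cong[OF refl], rule sum.cong[OF refl], rule Bochner_Integration.integral_sum)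
        (simp add: int_e)
    finally show ?thesis .
  qed
  also have "\<dots> = (\<Sum>i<k. \<Sum>j<l. 2 * const_q)"
    by (rule sum.cong[OF refl], rule sum.cong[OF refl]) (simp add: key)
  finally show ?thesis by simp
qed

end

definition edg :: "nat list \<Rightarrow> nat \<Rightarrow> nat set" where
  "edg xs i = {xs ! i, xs ! nxt (length xs) i}"

lemma mod_nxt': "m < k \<Longrightarrow> Suc m mod k = nxt k m"
  using mod_nxt[of m k] by simp

lemma cyc_edges_edg: "cyc_edges xs = edg xs ` {..<length xs}"
  unfolding cyc_edges_def edg_def by (auto simp: mod_nxt')

lemma nxt_simp: "Suc m < k \<Longrightarrow> nxt k m = Suc m" unfolding nxt_def by auto

lemma prv_nxt: "m < k \<Longrightarrow> prv k (nxt k m) = m" unfolding nxt_def prv_def by auto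

lemma edg_inj:
  assumes "distinct xs" "3 \<le> length xs" "i < length xs" "i' < length xs" "edg xs i = edg xs i'"
  shows "i = i'"
proof -
  let ?k = "length xs"
  have eq: "(xs ! i = xs ! i' \<and> xs ! nxt ?k i = xs ! nxt ?k i') \<or> (xs ! i = xs ! nxt ?k i' \<and> xs ! nxt ?k i = xs ! i')"
    using assms(5) unfolding edg_def doubleton_eq_iff .
  show ?thesis
  proof (cases "xs ! i = xs ! i'")
    case True then show ?thesis using assms by (simp add: nth_eq_iff_index_eq)
  next
    case False
    then have "xs ! i = xs ! nxt ?k i'" "xs ! nxt ?k i = xs ! i'" using eq by auto
    then have "i = nxt ?k i'" "nxt ?k i = i'" using assms by (simp_all add: nth_eq_iff_index_eq nxt_lt)
    then have "nxt ?k (nxt ?k i') = i'" by simp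
    then show ?thesis using nxt2_ne[of ?k i'] assms by simp
  qed
qed

lemma card_cyc_edges:
  assumes "distinct xs" "3 \<le> length xs"
  shows "card (cyc_edges xs) = length xs"
proof -
  have "inj_on (edg xs) {..<length xs}" using edg_inj[OF assms] by (auto simp: inj_on_def)
  then show ?thesis unfolding cyc_edges_edg by (simp add: card_image)
qed

lemma verts_cyc_edges:
  "\<Union>(cyc_edges xs) = set xs"
proof
  show "\<Union>(cyc_edges xs) \<subseteq> set xs" unfolding cyc_edges_edg edg_def
    by (auto cong: if_cong) (metis nth_mem nxt_lt)
  show "set xs \<subseteq> \<Union>(cyc_edges xs)" unfolding cyc_edges_edg edg_def
    by (auto simp: in_set_conv_nth)
qed

lemma finite_cyc_edges: "finite (cyc_edges xs)" unfolding cyc_edges_edg by simp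

lemma cyc_edges_sub:
  assumes "distinct ys" "3 \<le> length ys" "distinct xs" "length xs = length ys"
    and "cyc_edges ys \<subseteq> cyc_edges xs"
  shows "cyc_edges ys = cyc_edges xs"
  by (rule card_subset_eq) (use assms in \<open>simp_all add: finite_cyc_edges card_cyc_edges\<close>)

lemma edg_rotate:
  assumes "i < length xs"
  shows "edg (rotate r xs) i = edg xs ((r + i) mod length xs)"
proof -
  let ?k = "length xs"
  have k0: "0 < ?k" using assms by (simp del: length_greater_0_conv)
  have a: "nxt ?k i = Suc i mod ?k" using mod_nxt' assms by simp
  have "(r + nxt ?k i) mod ?k = (r + Suc i) mod ?k" unfolding a by (simp add: mod_add_right_eq)
  also have "\<dots> = Suc ((r + i) mod ?k) mod ?k" by (simp add: mod_Suc_eq)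
  also have "\<dots> = nxt ?k ((r + i) mod ?k)" using k0 by (simp add: mod_nxt')
  finally have "(r + nxt ?k i) mod ?k = nxt ?k ((r + i) mod ?k)" .
  then show ?thesis unfolding edg_def using assms k0 by (simp add: nth_rotate nxt_lt)
qed

lemma cyc_edges_rotate:
  assumes "distinct xs" "3 \<le> length xs"
  shows "cyc_edges (rotate r xs) = cyc_edges xs"
proof (rule cyc_edges_sub)
  show "cyc_edges (rotate r xs) \<subseteq> cyc_edges xs"
  proof
    fix E assume "E \<in> cyc_edges (rotate r xs)"
    then obtain x where x: "x < length xs" "E = edg (rotate r xs) x" unfolding cyc_edges_edg by auto
    then have "(r + x) mod length xs < length xs" by (intro mod_less_divisor) linarith
    then show "E \<in> cyc_edges xs" unfolding cyc_edges_edg x(2) edg_rotate[OF x(1)] by blast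
  qed
qed (use assms in simp_all)

lemma edg_rev:
  assumes "i < length xs"
  shows "edg (rev xs) i \<in> cyc_edges xs"
proof -
  let ?k = "length xs"
  show ?thesis
  proof (cases "Suc i < ?k")
    case True
    have "edg (rev xs) i = edg xs (?k - Suc (Suc i))"
      unfolding edg_def using True by (auto simp: rev_nth nxt_simp Suc_diff_Suc)
    then show ?thesis unfolding cyc_edges_edg using True by auto
  next
    case False
    then have i: "i = ?k - 1" using assms by simp
    have r1: "rev xs ! (?k - 1) = xs ! 0" and r0: "rev xs ! 0 = xs ! (?k - 1)"
    proof -
      have k0: "0 < ?k" using assms by linarith
      show "rev xs ! (?k - 1) = xs ! 0" using k0 by (simp add: rev_nth)
      show "rev xs ! 0 = xs ! (?k - 1)" using k0 by (simp add: rev_nth)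
    qed
    have n1: "nxt ?k (?k - 1) = 0" using assms unfolding nxt_def by simp
    have "edg (rev xs) i = edg xs (?k - 1)"
      unfolding edg_def i length_rev n1 r1 r0 by (auto simp: insert_commute)
    then show ?thesis unfolding cyc_edges_edg using assms by auto
  qed
qed

lemma cyc_edges_rev:
  assumes "distinct xs" "3 \<le> length xs"
  shows "cyc_edges (rev xs) = cyc_edges xs"
proof (rule cyc_edges_sub)
  show "cyc_edges (rev xs) \<subseteq> cyc_edges xs"
    unfolding cyc_edges_edg[of "rev xs"] using edg_rev by auto
qed (use assms in simp_all)

lemma neighbor:
  assumes "distinct xs" "m < length xs" "i < length xs" "{xs ! m, z} = edg xs i"
  shows "z = xs ! nxt (length xs) m \<or> z = xs ! prv (length xs) m"
proof -
  let ?k = "length xs"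
  have "(xs ! m = xs ! i \<and> z = xs ! nxt ?k i) \<or> (xs ! m = xs ! nxt ?k i \<and> z = xs ! i)"
    using assms(4) unfolding edg_def doubleton_eq_iff .
  then show ?thesis
  proof
    assume "xs ! m = xs ! i \<and> z = xs ! nxt ?k i"
    then show ?thesis using assms by (simp add: nth_eq_iff_index_eq)
  next
    assume h: "xs ! m = xs ! nxt ?k i \<and> z = xs ! i"
    then have "m = nxt ?k i" using assms by (simp add: nth_eq_iff_index_eq nxt_lt)
    then have "i = prv ?k m" using assms by (simp add: prv_nxt)
    then show ?thesis using h by simp
  qed
qed

lemma nxt_pow: "r < k \<Longrightarrow> (nxt k ^^ j) r = (r + j) mod k"
proof (induction j)
  case 0 then show ?case by simp
next
  case (Suc j)
  have "0 < k" using Suc by simp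
  then have "(r + Suc j) mod k = ((r + j) mod k + 1) mod k" by (simp add: mod_Suc_eq)
  also have "\<dots> = nxt k ((r + j) mod k)" using \<open>0 < k\<close> by (simp add: mod_nxt')
  finally show ?case using Suc by simp
qed

lemma walk:
  assumes dx: "distinct xs" and dy: "distinct ys" and k3: "3 \<le> length xs" and len: "length ys = length xs"
    and E: "cyc_edges ys = cyc_edges xs" and r: "r < length xs"
    and y0: "ys ! 0 = xs ! r" and y1: "ys ! 1 = xs ! nxt (length xs) r"
  shows "ys = rotate r xs"
proof -
  let ?k = "length xs" and ?a = "\<lambda>j. (nxt (length xs) ^^ j) r"
  have alt: "?a j < ?k" for j using r by (induction j) (simp_all add: nxt_lt)
  have P: "Suc j < ?k \<Longrightarrow> ys ! j = xs ! ?a j \<and> ys ! Suc j = xs ! ?a (Suc j)" for j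
  proof (induction j)
    case 0 then show ?case using y0 y1 by simp
  next
    case (Suc j)
    then have IH: "ys ! j = xs ! ?a j" "ys ! Suc j = xs ! ?a (Suc j)" by simp_all
    have "edg ys (Suc j) \<in> cyc_edges xs" using E Suc.prems len unfolding cyc_edges_edg[of ys] by auto
    then obtain i where i: "i < ?k" "edg ys (Suc j) = edg xs i" unfolding cyc_edges_edg by auto
    have ee: "edg ys (Suc j) = {xs ! ?a (Suc j), ys ! Suc (Suc j)}"
      unfolding edg_def using Suc.prems len IH by (simp add: nxt_simp)
    have "{xs ! ?a (Suc j), ys ! Suc (Suc j)} = edg xs i" using ee i(2) by simp
    then have "ys ! Suc (Suc j) = xs ! nxt ?k (?a (Suc j)) \<or> ys ! Suc (Suc j) = xs ! prv ?k (?a (Suc j))"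
      by (rule neighbor[OF dx alt i(1)])
    moreover have "prv ?k (?a (Suc j)) = ?a j" using alt[of j] by (simp add: prv_nxt)
    moreover have "ys ! Suc (Suc j) \<noteq> ys ! j" using dy Suc.prems len by (simp add: nth_eq_iff_index_eq)
    ultimately show ?case using IH by auto
  qed
  show ?thesis
  proof (rule nth_equalityI)
    show "length ys = length (rotate r xs)" using len by simp
    fix j assume "j < length ys"
    then have j: "j < ?k" using len by simp
    have "ys ! j = xs ! ?a j"
    proof (cases "Suc j < ?k")
      case True then show ?thesis using P by blast
    next
      case False
      then have "j = Suc (j - 1)" using j k3 by simp
      then show ?thesis using P[of "j - 1"] j by (metis False)
    qed
    then show "ys ! j = rotate r xs ! j" using j r by (simp add: nth_rotate nxt_pow)
  qed
qed

lemma rev_nth': "m < length xs \<Longrightarrow> rev xs ! m = xs ! (length xs - 1 - m)"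
  by (simp add: rev_nth)

lemma reps_eq:
  assumes xs: "is_cyc_list n xs"
  shows "{ys. is_cyc_list n ys \<and> cyc_edges ys = cyc_edges xs} =
         (\<lambda>r. rotate r xs) ` {..<length xs} \<union> (\<lambda>r. rotate r (rev xs)) ` {..<length xs}"
    (is "?R = ?A \<union> ?B")
proof
  have dx: "distinct xs" and k3: "3 \<le> length xs" and sx: "set xs \<subseteq> {..<n}"
    using xs unfolding is_cyc_list_def by auto
  show "?A \<union> ?B \<subseteq> ?R"
  proof
    fix ys assume "ys \<in> ?A \<union> ?B"
    then show "ys \<in> ?R"
    proof
      assume "ys \<in> ?A"
      then obtain r where "ys = rotate r xs" by auto
      then show ?thesis using dx k3 sx by (simp add: is_cyc_list_def cyc_edges_rotate)
    next
      assume "ys \<in> ?B"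
      then obtain r where "ys = rotate r (rev xs)" by auto
      moreover have "cyc_edges (rotate r (rev xs)) = cyc_edges xs"
        using cyc_edges_rotate[of "rev xs" r] cyc_edges_rev[OF dx k3] dx k3 by simp
      ultimately show ?thesis using dx k3 sx by (simp add: is_cyc_list_def)
    qed
  qed
  show "?R \<subseteq> ?A \<union> ?B"
  proof
    fix ys assume "ys \<in> ?R"
    then have ys: "is_cyc_list n ys" and E: "cyc_edges ys = cyc_edges xs" by auto
    have dy: "distinct ys" and ky: "3 \<le> length ys" using ys unfolding is_cyc_list_def by auto
    let ?k = "length xs"
    have len: "length ys = ?k" using card_cyc_edges[OF dy ky] card_cyc_edges[OF dx k3] E by simp
    have sy: "set ys = set xs" using verts_cyc_edges[of ys] verts_cyc_edges[of xs] E by simp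
    have "0 < length ys" using len k3 by linarith
    then have "ys ! 0 \<in> set ys" by (rule nth_mem)
    then have "ys ! 0 \<in> set xs" using sy by simp
    then obtain r where r: "r < ?k" "ys ! 0 = xs ! r" by (auto simp: in_set_conv_nth)
    have n0: "nxt ?k 0 = 1" using k3 by (simp add: nxt_def)
    have k0: "0 \<in> {..<length ys}" using len k3 by (simp only: lessThan_iff; linarith)
    have "edg ys 0 \<in> cyc_edges xs" using E k0 unfolding cyc_edges_edg[of ys] by blast
    then obtain i where i: "i < ?k" "edg ys 0 = edg xs i" unfolding cyc_edges_edg by auto
    have "{xs ! r, ys ! 1} = edg xs i" using i(2) r(2) len n0 by (simp add: edg_def)
    then have "ys ! 1 = xs ! nxt ?k r \<or> ys ! 1 = xs ! prv ?k r" by (rule neighbor[OF dx r(1) i(1)])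
    then show "ys \<in> ?A \<union> ?B"
    proof
      assume "ys ! 1 = xs ! nxt ?k r"
      then have "ys = rotate r xs" by (rule walk[OF dx dy k3 len E r(1) r(2)])
      then show ?thesis using r by auto
    next
      assume h: "ys ! 1 = xs ! prv ?k r"
      let ?r = "?k - 1 - r"
      have dr: "distinct (rev xs)" using dx by simp
      have Er: "cyc_edges ys = cyc_edges (rev xs)" using E cyc_edges_rev[OF dx k3] by simp
      have rr: "?r < length (rev xs)" using r by simp
      have a0: "ys ! 0 = rev xs ! ?r" using r by (simp add: rev_nth')
      have nl: "nxt ?k ?r < ?k" using r by (simp add: nxt_lt)
      have "?k - 1 - nxt ?k ?r = prv ?k r" using r k3 by (auto simp: nxt_def prv_def)
      then have a1: "ys ! 1 = rev xs ! nxt (length (rev xs)) ?r" using h nl by (simp add: rev_nth')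
      have "ys = rotate ?r (rev xs)"
        by (rule walk[OF dr dy _ _ Er rr a0 a1]) (use k3 len in simp_all)
      then show ?thesis using r by auto
    qed
  qed
qed

lemma card_reps:
  assumes xs: "is_cyc_list n xs"
  shows "card {ys. is_cyc_list n ys \<and> cyc_edges ys = cyc_edges xs} = 2 * length xs"
proof -
  have dx: "distinct xs" and k3: "3 \<le> length xs"
    using xs unfolding is_cyc_list_def by auto
  let ?k = "length xs"
  have ne: "xs \<noteq> []" using k3 by auto
  have one: "1 < ?k" using k3 by linarith
  have r0: "rotate r xs ! 0 = xs ! r" if "r < ?k" for r using that ne by (simp add: nth_rotate)
  have r1: "rotate r xs ! 1 = xs ! nxt ?k r" if "r < ?k" for r
    using that k3 one by (simp add: nth_rotate mod_nxt')
  have q0: "rotate r (rev xs) ! 0 = xs ! (?k - 1 - r)" if "r < ?k" for r using that ne by (simp add: nth_rotate rev_nth')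
  have q1: "rotate r (rev xs) ! 1 = xs ! (?k - 1 - nxt ?k r)" if "r < ?k" for r
  proof -
    have "rotate r (rev xs) ! 1 = rev xs ! ((r + 1) mod ?k)" using nth_rotate[of 1 "rev xs" r] one by simp
    also have "\<dots> = rev xs ! nxt ?k r" using mod_nxt[OF that] by simp
    also have "\<dots> = xs ! (?k - 1 - nxt ?k r)" using rev_nth'[of "nxt ?k r" xs] nxt_lt[OF that] by simp
    finally show ?thesis .
  qed
  have injA: "inj_on (\<lambda>r. rotate r xs) {..<?k}"
  proof (rule inj_onI)
    fix r r' assume "r \<in> {..<?k}" "r' \<in> {..<?k}" "rotate r xs = rotate r' xs"
    then have "xs ! r = xs ! r'" using r0[of r] r0[of r'] by (metis lessThan_iff)
    then show "r = r'" using dx \<open>r \<in> {..<?k}\<close> \<open>r' \<in> {..<?k}\<close> nth_eq_iff_index_eq by auto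
  qed
  have injB: "inj_on (\<lambda>r. rotate r (rev xs)) {..<?k}"
  proof (rule inj_onI)
    fix r r' assume "r \<in> {..<?k}" "r' \<in> {..<?k}" "rotate r (rev xs) = rotate r' (rev xs)"
    then have "xs ! (?k - 1 - r) = xs ! (?k - 1 - r')" using q0[of r] q0[of r'] by (metis lessThan_iff)
    moreover have b: "?k - 1 - r < ?k" "?k - 1 - r' < ?k" using \<open>r \<in> {..<?k}\<close> by auto
    ultimately have "?k - 1 - r = ?k - 1 - r'" using nth_eq_iff_index_eq[OF dx b] by simp
    then show "r = r'" using \<open>r \<in> {..<?k}\<close> \<open>r' \<in> {..<?k}\<close> by auto
  qed
  have disj: "(\<lambda>r. rotate r xs) ` {..<?k} \<inter> (\<lambda>r. rotate r (rev xs)) ` {..<?k} = {}"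
  proof (rule ccontr)
    assume "\<not> ?thesis"
    then obtain r r' where rr: "r < ?k" "r' < ?k" "rotate r xs = rotate r' (rev xs)" by auto
    then have "xs ! r = xs ! (?k - 1 - r')" "xs ! nxt ?k r = xs ! (?k - 1 - nxt ?k r')"
      using r0[of r] q0[of r'] r1[of r] q1[of r'] by metis+
    moreover have b: "nxt ?k r < ?k" "?k - 1 - nxt ?k r' < ?k" "?k - 1 - r' < ?k" using rr by (simp_all add: nxt_lt)
    ultimately have "r = ?k - 1 - r'" "nxt ?k r = ?k - 1 - nxt ?k r'"
      using nth_eq_iff_index_eq[OF dx rr(1) b(3)] nth_eq_iff_index_eq[OF dx b(1) b(2)] by simp_all
    then show False using rr k3 by (auto simp: nxt_def split: if_splits)
  qed
  show ?thesis unfolding reps_eq[OF xs]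
    by (subst card_Un_disjoint) (use disj injA injB in \<open>simp_all add: card_image\<close>)
qed

lemma cyc_len: "is_cyc_list n xs \<Longrightarrow> length xs \<le> n"
  unfolding is_cyc_list_def using distinct_card[of xs] card_mono[of "{..<n}" "set xs"] by auto

lemma lk_E:
  assumes xs: "is_cyc_list n xs" and ys: "is_cyc_list n ys" and d: "set xs \<inter> set ys = {}"
  shows "(\<integral>pos. (lk_list pos xs ys)^2 \<partial>embed_measure n) = real (length xs) * real (length ys) * const_q / 2"
    and "integrable (embed_measure n) (\<lambda>pos. (lk_list pos xs ys)^2)"
proof -
  have dx: "distinct xs" and k3: "3 \<le> length xs" and sx: "set xs \<subseteq> {..<n}"
    using xs unfolding is_cyc_list_def by auto
  have dy: "distinct ys" and l3: "3 \<le> length ys" and sy: "set ys \<subseteq> {..<n}"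
    using ys unfolding is_cyc_list_def by auto
  interpret twocyc n "length xs" "length ys" "(!) xs" "(!) ys"
  proof
    show "xs ! a < n" if "a < length xs" for a using subsetD[OF sx nth_mem[OF that]] by simp
    show "ys ! a < n" if "a < length ys" for a using subsetD[OF sy nth_mem[OF that]] by simp
    show "xs ! a \<noteq> ys ! b" if "a < length xs" "b < length ys" for a b
    proof
      assume "xs ! a = ys ! b"
      then have "xs ! a \<in> set xs \<inter> set ys" using nth_mem[OF that(1)] nth_mem[OF that(2)] by simp
      with d show False by simp
    qed
    show "3 \<le> length xs" "3 \<le> length ys" using k3 l3 by auto
    show "(xs ! a = xs ! b) = (a = b)" if "a < length xs" "b < length xs" for a b
      using nth_eq_iff_index_eq[OF dx that] .
    show "(ys ! a = ys ! b) = (a = b)" if "a < length ys" "b < length ys" for a b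
      using nth_eq_iff_index_eq[OF dy that] .
  qed
  have lk: "lk_list pos xs ys = (\<Sum>i<length xs. \<Sum>j<length ys. e pos i j) / 2" for pos
    unfolding lk_list_def e_def
    by (intro arg_cong[where f="\<lambda>x. x / 2"] sum.cong refl) (simp add: mod_nxt')
  show "(\<integral>pos. (lk_list pos xs ys)^2 \<partial>embed_measure n) = real (length xs) * real (length ys) * const_q / 2"
    unfolding lk by (rule E_sq)
  have sq: "((\<Sum>i<length xs. \<Sum>j<length ys. e pos i j) / 2)^2 =
     (\<Sum>i<length xs. \<Sum>j<length ys. \<Sum>i'<length xs. \<Sum>j'<length ys. e pos i j * e pos i' j') / 4" for pos
  proof -
    have "(\<Sum>i<length xs. \<Sum>j<length ys. e pos i j) * (\<Sum>i<length xs. \<Sum>j<length ys. e pos i j) =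
       (\<Sum>i<length xs. \<Sum>j<length ys. \<Sum>i'<length xs. \<Sum>j'<length ys. e pos i j * e pos i' j')"
      unfolding sum_distrib_right unfolding sum_distrib_left by (rule refl)
    then show ?thesis by (simp add: power2_eq_square)
  qed
  show "integrable (embed_measure n) (\<lambda>pos. (lk_list pos xs ys)^2)"
    unfolding lk sq
    by (intro integrable_divide Bochner_Integration.integrable_sum) (simp add: int_e)
qed

lemma cycles_rep: "C \<in> cycles n \<Longrightarrow> \<exists>xs. is_cyc_list n xs \<and> cyc_edges xs = C"
  unfolding cycles_def by auto

lemma some_rep:
  assumes "C \<in> cycles n"
  defines "xs \<equiv> SOME xs. is_cyc_list n xs \<and> cyc_edges xs = C"
  shows "is_cyc_list n xs" "cyc_edges xs = C" "card C = length xs" "cyc_verts C = set xs"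
proof -
  have h: "is_cyc_list n xs \<and> cyc_edges xs = C"
    unfolding xs_def by (rule someI_ex) (rule cycles_rep[OF assms(1)])
  then show "is_cyc_list n xs" "cyc_edges xs = C" by auto
  then show "card C = length xs" "cyc_verts C = set xs"
    using card_cyc_edges[of xs] verts_cyc_edges[of xs] unfolding is_cyc_list_def cyc_verts_def by auto
qed

lemma verts_ne: "C \<in> cycles n \<Longrightarrow> cyc_verts C \<noteq> {}"
  using some_rep[of C n] unfolding is_cyc_list_def by auto

lemma pair_E:
  assumes Pr: "Pr \<in> disj_cycle_pairs n"
  shows "(\<integral>pos. sq_lk_pair n pos Pr \<partial>embed_measure n) = const_q / 2 * real (\<Prod>C\<in>Pr. card C)"
    and "integrable (embed_measure n) (\<lambda>pos. sq_lk_pair n pos Pr)"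
proof -
  obtain C1 C2 where P: "Pr = {C1, C2}" "C1 \<in> cycles n" "C2 \<in> cycles n" "cyc_verts C1 \<inter> cyc_verts C2 = {}"
    using Pr unfolding disj_cycle_pairs_def by auto
  have ne: "C1 \<noteq> C2" using P verts_ne[of C1 n] by auto
  define C where "C = (SOME C. C \<in> Pr)"
  define C' where "C' = (SOME C'. C' \<in> Pr \<and> C' \<noteq> C)"
  have C: "C \<in> Pr" unfolding C_def by (rule someI_ex) (use P in auto)
  have C': "C' \<in> Pr \<and> C' \<noteq> C" unfolding C'_def by (rule someI_ex) (use P ne C in auto)
  have PC: "Pr = {C, C'}" using C C' P by auto
  have Cc: "C \<in> cycles n" "C' \<in> cycles n" using C C' P by auto
  have dv: "cyc_verts C \<inter> cyc_verts C' = {}" using C C' P by auto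
  define xs where "xs = (SOME xs. is_cyc_list n xs \<and> cyc_edges xs = C)"
  define ys where "ys = (SOME ys. is_cyc_list n ys \<and> cyc_edges ys = C')"
  note rx = some_rep[OF Cc(1), folded xs_def] and ry = some_rep[OF Cc(2), folded ys_def]
  have sq: "sq_lk_pair n pos Pr = (lk_list pos xs ys)^2" for pos
    unfolding sq_lk_pair_def Let_def lk_def C_def[symmetric] C'_def[symmetric] xs_def ys_def ..
  have d: "set xs \<inter> set ys = {}" using dv rx ry by simp
  have prod: "(\<Prod>C\<in>Pr. card C) = length xs * length ys"
    using PC C' rx ry by simp
  show "(\<integral>pos. sq_lk_pair n pos Pr \<partial>embed_measure n) = const_q / 2 * real (\<Prod>C\<in>Pr. card C)"
    unfolding sq prod using lk_E(1)[OF rx(1) ry(1) d] by simp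
  show "integrable (embed_measure n) (\<lambda>pos. sq_lk_pair n pos Pr)"
    unfolding sq using lk_E(2)[OF rx(1) ry(1) d] .
qed

lemma finite_cyc_lists: "finite {xs. is_cyc_list n xs}"
proof (rule finite_subset)
  show "{xs. is_cyc_list n xs} \<subseteq> {xs. set xs \<subseteq> {..<n} \<and> length xs \<le> n}"
    using cyc_len unfolding is_cyc_list_def by auto
qed (rule finite_lists_length_le, simp)

lemma finite_cycles: "finite (cycles n)"
proof -
  have "cycles n = cyc_edges ` {xs. is_cyc_list n xs}" unfolding cycles_def by auto
  then show ?thesis using finite_cyc_lists by simp
qed

lemma finite_pairs: "finite (disj_cycle_pairs n)"
  by (rule finite_subset[of _ "Pow (cycles n)"]) (auto simp: disj_cycle_pairs_def finite_cycles)

lemma mean_eq: "mean_sq_lk n = const_q / 2 * (\<Sum>Pr\<in>disj_cycle_pairs n. real (\<Prod>C\<in>Pr. card C))"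
proof -
  have "mean_sq_lk n = (\<Sum>Pr\<in>disj_cycle_pairs n. \<integral>pos. sq_lk_pair n pos Pr \<partial>embed_measure n)"
    unfolding mean_sq_lk_def by (rule Bochner_Integration.integral_sum) (rule pair_E(2))
  also have "\<dots> = (\<Sum>Pr\<in>disj_cycle_pairs n. const_q / 2 * real (\<Prod>C\<in>Pr. card C))"
    by (rule sum.cong[OF refl]) (rule pair_E(1))
  finally show ?thesis by (simp add: sum_distrib_left)
qed

definition Lp :: "nat \<Rightarrow> (nat list \<times> nat list) set" where
  "Lp n = {(xs, ys). is_cyc_list n xs \<and> is_cyc_list n ys \<and> set xs \<inter> set ys = {}}"

definition reps :: "nat \<Rightarrow> nat set set \<Rightarrow> nat list set" where
  "reps n C = {xs. is_cyc_list n xs \<and> cyc_edges xs = C}"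

lemma card_reps_C: "C \<in> cycles n \<Longrightarrow> card (reps n C) = 2 * card C"
proof -
  assume "C \<in> cycles n"
  then obtain xs where xs: "is_cyc_list n xs" "cyc_edges xs = C" using cycles_rep by blast
  have "card C = length xs" using xs card_cyc_edges[of xs] unfolding is_cyc_list_def by auto
  then show ?thesis unfolding reps_def using card_reps[OF xs(1)] xs(2) by simp
qed

lemma finite_reps: "C \<in> cycles n \<Longrightarrow> finite (reps n C)"
proof -
  assume C: "C \<in> cycles n"
  then obtain xs where xs: "is_cyc_list n xs" "cyc_edges xs = C" using cycles_rep by blast
  have "card C = length xs" using xs card_cyc_edges[of xs] unfolding is_cyc_list_def by auto
  then have "card (reps n C) > 0" using card_reps_C[OF C] xs(1) unfolding is_cyc_list_def by (cases xs) auto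
  then show ?thesis using card_gt_0_iff by blast
qed

lemma finite_Lp: "finite (Lp n)"
  by (rule finite_subset[of _ "{xs. is_cyc_list n xs} \<times> {xs. is_cyc_list n xs}"])
     (auto simp: Lp_def finite_cyc_lists)

lemma fiber_card:
  assumes Pr: "Pr \<in> disj_cycle_pairs n"
  shows "card {p \<in> Lp n. (case p of (xs, ys) \<Rightarrow> {cyc_edges xs, cyc_edges ys}) = Pr} = 8 * (\<Prod>C\<in>Pr. card C)"
proof -
  obtain C1 C2 where P: "Pr = {C1, C2}" "C1 \<in> cycles n" "C2 \<in> cycles n" "cyc_verts C1 \<inter> cyc_verts C2 = {}"
    using Pr unfolding disj_cycle_pairs_def by auto
  have ne: "C1 \<noteq> C2" using P verts_ne[of C1 n] by auto
  have vr: "set xs = cyc_verts C" if "xs \<in> reps n C" for xs C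
    using that verts_cyc_edges[of xs] unfolding reps_def cyc_verts_def by auto
  have eq: "{p \<in> Lp n. (case p of (xs, ys) \<Rightarrow> {cyc_edges xs, cyc_edges ys}) = Pr} =
      reps n C1 \<times> reps n C2 \<union> reps n C2 \<times> reps n C1" (is "?F = ?U")
  proof
    show "?F \<subseteq> ?U"
    proof
      fix p assume "p \<in> ?F"
      then obtain xs ys where p: "p = (xs, ys)" "is_cyc_list n xs" "is_cyc_list n ys"
        "{cyc_edges xs, cyc_edges ys} = {C1, C2}" using P(1) unfolding Lp_def by auto
      then show "p \<in> ?U" unfolding reps_def doubleton_eq_iff by auto
    qed
    show "?U \<subseteq> ?F"
    proof
      fix p assume "p \<in> ?U"
      then obtain xs ys where p: "p = (xs, ys)" and
        h: "(xs \<in> reps n C1 \<and> ys \<in> reps n C2) \<or> (xs \<in> reps n C2 \<and> ys \<in> reps n C1)" by auto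
      have "set xs \<inter> set ys = {}" using h vr P(4) by auto
      moreover have "{cyc_edges xs, cyc_edges ys} = Pr" using h P(1) unfolding reps_def by auto
      ultimately show "p \<in> ?F" using h p unfolding Lp_def reps_def by auto
    qed
  qed
  have disj: "(reps n C1 \<times> reps n C2) \<inter> (reps n C2 \<times> reps n C1) = {}"
    using ne unfolding reps_def by auto
  have "card ?U = card (reps n C1) * card (reps n C2) + card (reps n C2) * card (reps n C1)"
    by (subst card_Un_disjoint) (use disj P finite_reps in \<open>simp_all add: card_cartesian_product\<close>)
  also have "\<dots> = 8 * (card C1 * card C2)" using card_reps_C[OF P(2)] card_reps_C[OF P(3)] by simp
  finally show ?thesis unfolding eq using P(1) ne by simp
qed

lemma count1: "card (Lp n) = 8 * (\<Sum>Pr\<in>disj_cycle_pairs n. \<Prod>C\<in>Pr. card C)"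
proof -
  let ?phi = "\<lambda>p. case p of (xs, ys) \<Rightarrow> {cyc_edges xs, cyc_edges ys}"
  have img: "?phi ` Lp n \<subseteq> disj_cycle_pairs n"
  proof
    fix P assume "P \<in> ?phi ` Lp n"
    then obtain xs ys where h: "P = {cyc_edges xs, cyc_edges ys}" "is_cyc_list n xs" "is_cyc_list n ys"
      "set xs \<inter> set ys = {}" unfolding Lp_def by auto
    have c1: "cyc_edges xs \<in> cycles n" "cyc_edges ys \<in> cycles n" unfolding cycles_def using h by auto
    have c2: "cyc_verts (cyc_edges xs) \<inter> cyc_verts (cyc_edges ys) = {}"
      unfolding cyc_verts_def verts_cyc_edges using h(4) .
    show "P \<in> disj_cycle_pairs n" unfolding disj_cycle_pairs_def using h(1) c1 c2 by blast
  qed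
  have "card (Lp n) = (\<Sum>Pr\<in>disj_cycle_pairs n. card {p \<in> Lp n. ?phi p = Pr})"
    using sum.group[OF finite_Lp finite_pairs img, of "\<lambda>_. 1::nat"] by simp
  also have "\<dots> = (\<Sum>Pr\<in>disj_cycle_pairs n. 8 * (\<Prod>C\<in>Pr. card C))"
    by (rule sum.cong[OF refl]) (rule fiber_card)
  finally show ?thesis by (simp add: sum_distrib_left)
qed

lemma prod_fact: "m \<le> n \<Longrightarrow> real (\<Prod>{n - m + 1..n}) = fact n / fact (n - m)"
proof -
  assume "m \<le> n"
  have "(fact n :: nat) = fact (n - m) * \<Prod>{Suc (n - m)..n}" by (rule fact_eq_fact_times) simp
  then have "(fact n :: real) = fact (n - m) * real (\<Prod>{Suc (n - m)..n})"
    by (metis of_nat_fact of_nat_mult)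
  then show ?thesis by (simp add: field_simps)
qed

lemma card_Lkl:
  assumes "3 \<le> k" "3 \<le> l" "k + l \<le> n"
  shows "card {p \<in> Lp n. length (fst p) = k \<and> length (snd p) = l} = \<Prod>{n - (k + l) + 1..n}"
proof -
  let ?D = "{zs. length zs = k + l \<and> distinct zs \<and> set zs \<subseteq> {..<n}}"
  let ?sp = "\<lambda>zs. (take k zs, drop k zs)"
  have eq: "{p \<in> Lp n. length (fst p) = k \<and> length (snd p) = l} = ?sp ` ?D"
  proof
    show "{p \<in> Lp n. length (fst p) = k \<and> length (snd p) = l} \<subseteq> ?sp ` ?D"
    proof
      fix p assume "p \<in> {p \<in> Lp n. length (fst p) = k \<and> length (snd p) = l}"
      then obtain xs ys where p: "p = (xs, ys)" "is_cyc_list n xs" "is_cyc_list n ys" "set xs \<inter> set ys = {}"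
        "length xs = k" "length ys = l" unfolding Lp_def by auto
      then have "xs @ ys \<in> ?D" unfolding is_cyc_list_def by auto
      moreover have "p = ?sp (xs @ ys)" using p by simp
      ultimately show "p \<in> ?sp ` ?D" by blast
    qed
    show "?sp ` ?D \<subseteq> {p \<in> Lp n. length (fst p) = k \<and> length (snd p) = l}"
    proof
      fix p assume "p \<in> ?sp ` ?D"
      then obtain zs where z: "p = ?sp zs" "length zs = k + l" "distinct zs" "set zs \<subseteq> {..<n}" by auto
      have d: "distinct (take k zs @ drop k zs)" using z by simp
      have "set (take k zs) \<subseteq> {..<n}" "set (drop k zs) \<subseteq> {..<n}"
        using z set_take_subset[of k zs] set_drop_subset[of k zs] by auto
      then show "p \<in> {p \<in> Lp n. length (fst p) = k \<and> length (snd p) = l}"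
        using z d assms unfolding Lp_def is_cyc_list_def by (auto simp del: append_take_drop_id)
    qed
  qed
  have inj: "inj_on ?sp ?D"
  proof (rule inj_onI)
    fix zs zs' assume "?sp zs = ?sp zs'"
    then show "zs = zs'" by (metis append_take_drop_id prod.inject)
  qed
  have "card ?D = \<Prod>{card {..<n} - (k + l) + 1..card {..<n}}"
    by (rule card_lists_distinct_length_eq) (use assms in auto)
  then show ?thesis unfolding eq card_image[OF inj] by simp
qed

lemma count2: "real (card (Lp n)) = (\<Sum>k = 3..n - 3. \<Sum>l = 3..n - k. fact n / fact (n - k - l))"
proof -
  let ?A = "\<lambda>k l. {p \<in> Lp n. length (fst p) = k \<and> length (snd p) = l}"
  have eq: "Lp n = (\<Union>k\<in>{3..n-3}. \<Union>l\<in>{3..n-k}. ?A k l)"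
  proof (rule equalityI)
    show "Lp n \<subseteq> (\<Union>k\<in>{3..n-3}. \<Union>l\<in>{3..n-k}. ?A k l)"
    proof
      fix p assume p: "p \<in> Lp n"
      then obtain xs ys where pp: "p = (xs, ys)" "is_cyc_list n xs" "is_cyc_list n ys" "set xs \<inter> set ys = {}"
        unfolding Lp_def by auto
      have c: "is_cyc_list n (xs @ ys)" using pp unfolding is_cyc_list_def by simp
      have le: "length xs + length ys \<le> n" using cyc_len[OF c] by simp
      have l3: "3 \<le> length xs" "3 \<le> length ys" using pp(2,3) unfolding is_cyc_list_def by simp_all
      have k: "length xs \<in> {3..n-3}" using le l3 by simp
      have l: "length ys \<in> {3..n - length xs}" using le l3 by simp
      have m: "p \<in> ?A (length xs) (length ys)" using p pp by simp
      show "p \<in> (\<Union>k\<in>{3..n-3}. \<Union>l\<in>{3..n-k}. ?A k l)"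
        apply (rule UN_I[OF k])
        apply (rule UN_I[OF l])
        by (rule m)
    qed
    show "(\<Union>k\<in>{3..n-3}. \<Union>l\<in>{3..n-k}. ?A k l) \<subseteq> Lp n" by blast
  qed
  have fA: "finite (?A k l)" for k l by (rule finite_subset[OF _ finite_Lp]) auto
  have fU: "finite (\<Union>l\<in>S. ?A k l)" for k S by (rule finite_subset[OF _ finite_Lp]) auto
  have c0: "card (Lp n) = card (\<Union>k\<in>{3..n-3}. \<Union>l\<in>{3..n-k}. ?A k l)"
    using eq by (rule arg_cong)
  have dU: "(\<Union>l\<in>S. ?A k l) \<inter> (\<Union>l\<in>S'. ?A k' l) = {}" if "k \<noteq> k'" for k k' S S'
    using that by auto
  have "card (\<Union>k\<in>{3..n-3}. \<Union>l\<in>{3..n-k}. ?A k l) = (\<Sum>k\<in>{3..n-3}. card (\<Union>l\<in>{3..n-k}. ?A k l))"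
    by (rule card_UN_disjoint) (simp_all add: fU dU)
  then have "card (Lp n) = (\<Sum>k\<in>{3..n-3}. card (\<Union>l\<in>{3..n-k}. ?A k l))"
    using c0 by simp
  also have "\<dots> = (\<Sum>k\<in>{3..n-3}. \<Sum>l\<in>{3..n-k}. card (?A k l))"
    by (rule sum.cong[OF refl], rule card_UN_disjoint) (auto simp: fA)
  also have "\<dots> = (\<Sum>k\<in>{3..n-3}. \<Sum>l\<in>{3..n-k}. \<Prod>{n - (k + l) + 1..n})"
    by (intro sum.cong refl card_Lkl) auto
  finally have "real (card (Lp n)) = (\<Sum>k\<in>{3..n-3}. \<Sum>l\<in>{3..n-k}. real (\<Prod>{n - (k + l) + 1..n}))"
    by simp
  also have "\<dots> = (\<Sum>k = 3..n - 3. \<Sum>l = 3..n - k. fact n / fact (n - k - l))"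
    by (intro sum.cong refl, subst prod_fact) (auto simp: diff_diff_left)
  finally show ?thesis .
qed

lemma sum_ident:
  fixes g :: "nat \<Rightarrow> real"
  shows "(\<Sum>k = 3..m - 3. \<Sum>l = 3..m - k. g (k + l)) = (\<Sum>i = 6..m. g i * (real i - 5))"
proof -
  let ?S = "SIGMA k:{3..m-3}. {3..m-k}"
  have 1: "(\<Sum>k = 3..m - 3. \<Sum>l = 3..m - k. g (k + l)) = (\<Sum>p\<in>?S. g (fst p + snd p))"
    by (subst sum.Sigma) (auto simp: case_prod_beta)
  have img: "(\<lambda>p. fst p + snd p) ` ?S \<subseteq> {6..m}" by auto
  have 2: "(\<Sum>p\<in>?S. g (fst p + snd p)) = (\<Sum>i\<in>{6..m}. \<Sum>p\<in>{p \<in> ?S. fst p + snd p = i}. g (fst p + snd p))"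
    by (rule sum.group[symmetric]) (use img in auto)
  have 3: "(\<Sum>p\<in>{p \<in> ?S. fst p + snd p = i}. g (fst p + snd p)) = g i * (real i - 5)" if i: "i \<in> {6..m}" for i
  proof -
    have fe: "{p \<in> ?S. fst p + snd p = i} = (\<lambda>k. (k, i - k)) ` {3..i-3}"
      using i by (auto simp: image_iff)
    have inj: "inj_on (\<lambda>k. (k, i - k)) {3..i-3}" by (auto simp: inj_on_def)
    have c: "card {p \<in> ?S. fst p + snd p = i} = i - 5" unfolding fe card_image[OF inj] using i by simp
    have "(\<Sum>p\<in>{p \<in> ?S. fst p + snd p = i}. g (fst p + snd p)) = (\<Sum>p\<in>{p \<in> ?S. fst p + snd p = i}. g i)"
      by (rule sum.cong) auto
    also have "\<dots> = real (card {p \<in> ?S. fst p + snd p = i}) * g i" by simp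
    also have "\<dots> = real (i - 5) * g i" unfolding c ..
    finally have fin: "(\<Sum>p\<in>{p \<in> ?S. fst p + snd p = i}. g (fst p + snd p)) = real (i - 5) * g i" .
    have r: "real (i - 5) = real i - 5" using i by (simp add: of_nat_diff)
    show ?thesis using fin unfolding r by (simp only: mult.commute)
  qed
  show ?thesis unfolding 1 2 by (rule sum.cong[OF refl]) (rule 3)
qed

theorem mainTheorem2:
  fixes n :: nat
  assumes "6 \<le> n"
  shows "mean_sq_lk n =
           const_q / 16 * (\<Sum>k = 3..n - 3. \<Sum>l = 3..n - k. fact n / fact (n - k - l))
       \<and> mean_sq_lk n =
           const_q / 16 * (\<Sum>i = 6..n. fact n / fact (n - i) * (real i - 5))"
proof -
  have s: "(\<Sum>Pr\<in>disj_cycle_pairs n. real (\<Prod>C\<in>Pr. card C)) = real (card (Lp n)) / 8"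
    by (simp add: count1)
  have m: "mean_sq_lk n = const_q / 16 * (\<Sum>k = 3..n - 3. \<Sum>l = 3..n - k. fact n / fact (n - k - l))"
    unfolding mean_eq s count2 by simp
  have g: "(\<Sum>k = 3..n - 3. \<Sum>l = 3..n - k. fact n / fact (n - k - l)) =
      (\<Sum>i = 6..n. fact n / fact (n - i) * (real i - 5) :: real)"
    using sum_ident[of "\<lambda>i. fact n / fact (n - i)" n] by (simp add: diff_diff_left)
  show ?thesis using m g by simp
qed

end
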